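(* Let $(\{U_\alpha\},\{W_\beta\})$ be a solution of the combined $(\mathrm{sl}_n(\mathbb{C}),\mathfrak{t})$-hierarchy, and set $B_{m\alpha}:=\pi_{\geqslant0}(U_\alpha z^m)$ for $m\ge0$ and $C_{m\beta}:=\pi_{<0}(W_\beta z^{m+1})$ for $m<0$. Then for all $\alpha_1,\alpha_2,\beta_1,\beta_2\in\{1,\dots,r\}$: $$\partial_{m_1\beta_1}(B_{m_2\alpha_2})-\partial_{m_2\alpha_2}(C_{m_1\beta_1})-[C_{m_1\beta_1},B_{m_2\alpha_2}]=0\quad (m_1<0,\ m_2\ge0),$$ $$\partial_{m_1\alpha_1}(B_{m_2\alpha_2})-\partial_{m_2\alpha_2}(B_{m_1\alpha_1})-[B_{m_1\alpha_1},B_{m_2\alpha_2}]=0\quad (m_1,m_2\ge0),$$ $$\partial_{m_1\beta_1}(C_{m_2\beta_2})-\partial_{m_2\beta_2}(C_{m_1\beta_1})-[C_{m_1\beta_1},C_{m_2\beta_2}]=0\quad (m_1,m_2<0).$$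
   Context: $R$ is a commutative $\mathbb{C}$-algebra with commuting $\mathbb{C}$-linear derivations $\partial_{m\alpha}$, $m\in\mathbb{Z}$, $1\le\alpha\le r$, acting coefficientwise on matrices and on series. $\mathrm{gl}_n(R)[z,z^{-1})$ consists of formal series $\sum_{i=-\infty}^{N}X_iz^i$ and $\mathrm{gl}_n(R)[z^{-1},z)$ of formal series $\sum_{i=-N}^{\infty}X_iz^i$ ($X_i\in\mathrm{gl}_n(R)$), both with bracket $[X,Y]=\sum[X_i,Y_j]z^{i+j}$; $\mathrm{sl}_n$ versions have traceless coefficients. $\pi_{\geqslant0}$ (resp. $\pi_{<0}$) keeps the terms with $i\ge0$ (resp. $i<0$). $\mathfrak{t}\subset\mathrm{sl}_n(\mathbb{C})$ is commutative of maximal dimension $r$, basis $E_1,\dots,E_r$. $G_{<0}=\{\mathrm{Id}+\sum_{i\ge1}Y_iz^{-i}\mid Y_i\in\mathrm{gl}_n(R)\}$; $G_{\geqslant0}=\{X_0+\sum_{i\ge1}X_iz^i\mid X_i\in\mathrm{gl}_n(R),\ X_0\text{ invertible}\}$. A deformation $(\{U_\alpha\},\{W_\beta\})$ means $U_\alpha=gE_\alpha g^{-1}$ ($1\le\alpha\le r$) for some $g\in G_{<0}$ and $W_\beta=XE_\beta z^{-1}X^{-1}$ ($1\le\beta\le r$) for some $X\in G_{\geqslant0}$. It is a solution of the combined $(\mathrm{sl}_n(\mathbb{C}),\mathfrak{t})$-hierarchy if: for all $m\ge0$ and all $\alpha_1,\alpha_2,\beta$: $\partial_{m\alpha_1}(U_{\alpha_2})=[\pi_{\geqslant0}(U_{\alpha_1}z^m),U_{\alpha_2}]$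 and $\partial_{m\alpha_1}(W_\beta)=[\pi_{\geqslant0}(U_{\alpha_1}z^m),W_\beta]$; and for all $m<0$ and all $\beta_1,\beta_2,\alpha$: $\partial_{m\beta_1}(W_{\beta_2})=[\pi_{<0}(W_{\beta_1}z^{m+1}),W_{\beta_2}]$ and $\partial_{m\beta_1}(U_\alpha)=[\pi_{<0}(W_{\beta_1}z^{m+1}),U_\alpha]$. (Here $\pi_{\geqslant0}(U z^m)$ is a polynomial in $z$ and $\pi_{<0}(Wz^{m+1})$ a polynomial in $z^{-1}$, so all brackets are well defined.) *)

theory Defs
  imports Complex_Main
begin

(* n x n matrices over a ring, indexed by a finite type 'n (n = CARD('n)) *)
type_synonym ('a,'n) mat = "'n \<Rightarrow> 'n \<Rightarrow> 'a"

(* formal series sum_i X_i z^i, represented by the coefficient function i \<mapsto> X_i *)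
type_synonym ('a,'n) ser = "int \<Rightarrow> ('a,'n) mat"

definition mzero :: "('a::zero,'n) mat" where "mzero = (\<lambda>i j. 0)"
definition mone :: "('a::{zero,one},'n) mat" where "mone = (\<lambda>i j. if i = j then 1 else 0)"
definition mmul :: "('a::comm_ring_1,'n::finite) mat \<Rightarrow> ('a,'n) mat \<Rightarrow> ('a,'n) mat" where
  "mmul A B = (\<lambda>i j. \<Sum>k\<in>UNIV. A i k * B k j)"
definition mbracket :: "('a::comm_ring_1,'n::finite) mat \<Rightarrow> ('a,'n) mat \<Rightarrow> ('a,'n) mat" where
  "mbracket A B = (\<lambda>i j. mmul A B i j - mmul B A i j)"
definition mtrace :: "('a::comm_ring_1,'n::finite) mat \<Rightarrow> 'a" where
  "mtrace A = (\<Sum>i\<in>UNIV. A i i)"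

(* product of series: coefficient k is sum_i X_i Y_{k-i}, over the (in all uses finite)
   set of i where both factors are nonzero *)
definition smul :: "('a::comm_ring_1,'n::finite) ser \<Rightarrow> ('a,'n) ser \<Rightarrow> ('a,'n) ser" where
  "smul S T = (\<lambda>k a b. \<Sum>i\<in>{i. S i \<noteq> mzero \<and> T (k - i) \<noteq> mzero}. mmul (S i) (T (k - i)) a b)"
definition sbracket :: "('a::comm_ring_1,'n::finite) ser \<Rightarrow> ('a,'n) ser \<Rightarrow> ('a,'n) ser" where
  "sbracket S T = (\<lambda>k a b. smul S T k a b - smul T S k a b)"
definition sdiff :: "('a::comm_ring_1,'n) ser \<Rightarrow> ('a,'n) ser \<Rightarrow> ('a,'n) ser" where
  "sdiff S T = (\<lambda>k a b. S k a b - T k a b)"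
definition szero :: "('a::zero,'n) ser" where "szero = (\<lambda>k. mzero)"
definition sone :: "('a::{zero,one},'n) ser" where "sone = (\<lambda>k. if k = 0 then mone else mzero)"
definition sconst :: "('a::zero,'n) mat \<Rightarrow> ('a,'n) ser" where
  "sconst X = (\<lambda>k. if k = 0 then X else mzero)"
(* S z^m *)
definition sshift :: "('a,'n) ser \<Rightarrow> int \<Rightarrow> ('a,'n) ser" where
  "sshift S m = (\<lambda>k. S (k - m))"
definition pi_ge0 :: "('a::zero,'n) ser \<Rightarrow> ('a,'n) ser" where
  "pi_ge0 S = (\<lambda>k. if k \<ge> 0 then S k else mzero)"
definition pi_lt0 :: "('a::zero,'n) ser \<Rightarrow> ('a,'n) ser" where
  "pi_lt0 S = (\<lambda>k. if k < 0 then S k else mzero)"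
definition sapply :: "('a \<Rightarrow> 'a) \<Rightarrow> ('a,'n) ser \<Rightarrow> ('a,'n) ser" where
  "sapply d S = (\<lambda>k a b. d (S k a b))"
definition cmat :: "(complex \<Rightarrow> 'a) \<Rightarrow> (complex,'n) mat \<Rightarrow> ('a,'n) mat" where
  "cmat emb E = (\<lambda>i j. emb (E i j))"

(* R is a commutative C-algebra: structure ring homomorphism emb : C \<rightarrow> R *)
definition C_algebra_map :: "(complex \<Rightarrow> 'a::comm_ring_1) \<Rightarrow> bool" where
  "C_algebra_map emb \<longleftrightarrow> emb 1 = 1 \<and> (\<forall>x y. emb (x + y) = emb x + emb y) \<and>
     (\<forall>x y. emb (x * y) = emb x * emb y)"

definition C_derivation :: "(complex \<Rightarrow> 'a::comm_ring_1) \<Rightarrow> ('a \<Rightarrow> 'a) \<Rightarrow> bool" where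
  "C_derivation emb d \<longleftrightarrow> (\<forall>x y. d (x + y) = d x + d y) \<and>
     (\<forall>c x. d (emb c * x) = emb c * d x) \<and> (\<forall>x y. d (x * y) = x * d y + d x * y)"

(* F_1..F_k: pairwise commuting, traceless, C-linearly independent complex matrices,
   i.e. a basis of a k-dimensional commutative Lie subalgebra of sl_n(C) *)
definition comm_sl_basis :: "(nat \<Rightarrow> (complex,'n::finite) mat) \<Rightarrow> nat \<Rightarrow> bool" where
  "comm_sl_basis F k \<longleftrightarrow>
     (\<forall>a\<in>{1..k}. mtrace (F a) = 0) \<and>
     (\<forall>a\<in>{1..k}. \<forall>b\<in>{1..k}. mmul (F a) (F b) = mmul (F b) (F a)) \<and>
     (\<forall>c :: nat \<Rightarrow> complex. (\<forall>i j. (\<Sum>a=1..k. c a * F a i j) = 0) \<longrightarrow> (\<forall>a\<in>{1..k}. c a = 0))"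

(* E_1..E_r basis of t, commutative subalgebra of sl_n(C) of maximal dimension r *)
definition max_comm_basis :: "(nat \<Rightarrow> (complex,'n::finite) mat) \<Rightarrow> nat \<Rightarrow> bool" where
  "max_comm_basis E r \<longleftrightarrow> comm_sl_basis E r \<and>
     (\<forall>(F :: nat \<Rightarrow> (complex,'n) mat) k. comm_sl_basis F k \<longrightarrow> k \<le> r)"

definition G_lt0 :: "('a::comm_ring_1,'n::finite) ser \<Rightarrow> bool" where
  "G_lt0 g \<longleftrightarrow> g 0 = mone \<and> (\<forall>i>0. g i = mzero)"

definition G_ge0 :: "('a::comm_ring_1,'n::finite) ser \<Rightarrow> bool" where
  "G_ge0 X \<longleftrightarrow> (\<forall>i<0. X i = mzero) \<and> (\<exists>Y. mmul (X 0) Y = mone \<and> mmul Y (X 0) = mone)"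

definition deformation ::
  "(complex \<Rightarrow> 'a::comm_ring_1) \<Rightarrow> (nat \<Rightarrow> (complex,'n::finite) mat) \<Rightarrow> nat \<Rightarrow>
   (nat \<Rightarrow> ('a,'n) ser) \<Rightarrow> (nat \<Rightarrow> ('a,'n) ser) \<Rightarrow> bool" where
  "deformation emb E r U W \<longleftrightarrow>
     (\<exists>g ginv. G_lt0 g \<and> G_lt0 ginv \<and> smul g ginv = sone \<and> smul ginv g = sone \<and>
        (\<forall>a\<in>{1..r}. U a = smul (smul g (sconst (cmat emb (E a)))) ginv)) \<and>
     (\<exists>X Xinv. G_ge0 X \<and> G_ge0 Xinv \<and> smul X Xinv = sone \<and> smul Xinv X = sone \<and>
        (\<forall>b\<in>{1..r}. W b = smul (smul X (sshift (sconst (cmat emb (E b))) (-1))) Xinv))"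

definition hierarchy_solution ::
  "(complex \<Rightarrow> 'a::comm_ring_1) \<Rightarrow> (int \<Rightarrow> nat \<Rightarrow> 'a \<Rightarrow> 'a) \<Rightarrow> (nat \<Rightarrow> (complex,'n::finite) mat) \<Rightarrow> nat \<Rightarrow>
   (nat \<Rightarrow> ('a,'n) ser) \<Rightarrow> (nat \<Rightarrow> ('a,'n) ser) \<Rightarrow> bool" where
  "hierarchy_solution emb D E r U W \<longleftrightarrow> deformation emb E r U W \<and>
     (\<forall>m\<ge>0. \<forall>a1\<in>{1..r}. \<forall>a2\<in>{1..r}.
        sapply (D m a1) (U a2) = sbracket (pi_ge0 (sshift (U a1) m)) (U a2)) \<and>
     (\<forall>m\<ge>0. \<forall>a1\<in>{1..r}. \<forall>b\<in>{1..r}.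
        sapply (D m a1) (W b) = sbracket (pi_ge0 (sshift (U a1) m)) (W b)) \<and>
     (\<forall>m<0. \<forall>b1\<in>{1..r}. \<forall>b2\<in>{1..r}.
        sapply (D m b1) (W b2) = sbracket (pi_lt0 (sshift (W b1) (m + 1))) (W b2)) \<and>
     (\<forall>m<0. \<forall>b1\<in>{1..r}. \<forall>a\<in>{1..r}.
        sapply (D m b1) (U a) = sbracket (pi_lt0 (sshift (W b1) (m + 1))) (U a))"

end

theory Submission
  imports Defs "HOL-Computational_Algebra.Formal_Laurent_Series"
begin


lemma mmul_assoc: "mmul (mmul A B) C = mmul A (mmul B C)"
  unfolding mmul_def
  by (auto simp: sum_distrib_left sum_distrib_right mult.assoc intro!: ext sum.swap[THEN trans] sum.cong)

lemma mmul_mone_left [simp]: "mmul mone A = A"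
  unfolding mmul_def mone_def by (auto intro!: ext simp: if_distrib[where f="\<lambda>x. x * _"] cong: if_cong)
lemma mmul_mone_right [simp]: "mmul A mone = A"
  unfolding mmul_def mone_def by (auto intro!: ext simp: if_distrib[where f="\<lambda>x. _ * x"] cong: if_cong)
lemma mmul_mzero_left [simp]: "mmul mzero A = mzero"
  unfolding mmul_def mzero_def by auto
lemma mmul_mzero_right [simp]: "mmul A mzero = mzero"
  unfolding mmul_def mzero_def by auto
lemma mmul_add_left: "mmul (\<lambda>i j. A i j + B i j) C = (\<lambda>i j. mmul A C i j + mmul B C i j)"
  unfolding mmul_def by (auto simp: algebra_simps sum.distrib)
lemma mmul_add_right: "mmul C (\<lambda>i j. A i j + B i j) = (\<lambda>i j. mmul C A i j + mmul C B i j)"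
  unfolding mmul_def by (auto simp: algebra_simps sum.distrib)

typedef ('a,'n) M = "UNIV :: ('a,'n) mat set" by auto

lemmas M_simps = Abs_M_inverse[OF UNIV_I] Rep_M_inverse Abs_M_inject[OF UNIV_I UNIV_I]

instantiation M :: (comm_ring_1, finite) ring_1
begin
definition "0 = Abs_M mzero"
definition "1 = Abs_M mone"
definition "x + y = Abs_M (\<lambda>i j. Rep_M x i j + Rep_M y i j)"
definition "x - y = Abs_M (\<lambda>i j. Rep_M x i j - Rep_M y i j)"
definition "- x = Abs_M (\<lambda>i j. - Rep_M x i j)"
definition "x * y = Abs_M (mmul (Rep_M x) (Rep_M y))"
instance
proof
  fix a b c :: "('a,'b) M"
  show "a * b * c = a * (b * c)" by (simp add: times_M_def M_simps mmul_assoc)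
  show "1 * a = a" by (simp add: times_M_def one_M_def M_simps)
  show "a * 1 = a" by (simp add: times_M_def one_M_def M_simps)
  show "(a + b) * c = a * c + b * c" by (simp add: times_M_def plus_M_def M_simps mmul_add_left)
  show "a * (b + c) = a * b + a * c" by (simp add: times_M_def plus_M_def M_simps mmul_add_right)
  show "a + b + c = a + (b + c)" by (simp add: plus_M_def M_simps add.assoc)
  show "a + b = b + a" by (simp add: plus_M_def M_simps add.commute)
  show "0 + a = a" by (simp add: plus_M_def zero_M_def M_simps mzero_def)
  show "- a + a = 0" by (simp add: plus_M_def zero_M_def uminus_M_def M_simps mzero_def)
  show "a - b = a + - b" by (simp add: plus_M_def minus_M_def uminus_M_def M_simps)
  show "(0::('a,'b) M) \<noteq> 1" by (auto simp: zero_M_def one_M_def M_simps mzero_def mone_def fun_eq_iff)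
qed
end


unbundle fps_syntax

definition lbS :: "('a::zero,'n) ser \<Rightarrow> int \<Rightarrow> bool" where "lbS S N \<longleftrightarrow> (\<forall>i<N. S i = mzero)"
definition ubS :: "('a::zero,'n) ser \<Rightarrow> int \<Rightarrow> bool" where "ubS S N \<longleftrightarrow> (\<forall>i>N. S i = mzero)"

lemma mzero_apply [simp]: "mzero a b = 0" by (simp add: mzero_def)

lemma smul_win:
  assumes "finite A" "\<And>i. S i \<noteq> mzero \<Longrightarrow> T (k - i) \<noteq> mzero \<Longrightarrow> i \<in> A"
  shows "smul S T k a b = (\<Sum>i\<in>A. mmul (S i) (T (k - i)) a b)"
  unfolding smul_def
  apply (rule sum.mono_neutral_left[OF assms(1)])
  using assms(2) by auto

lemma smul_empty:
  assumes "\<And>i. S i \<noteq> mzero \<Longrightarrow> T (k - i) \<noteq> mzero \<Longrightarrow> False"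
  shows "smul S T k = mzero"
  using smul_win[of "{}" S T k] assms by (auto simp: mzero_def)

definition F :: "('a::comm_ring_1,'n::finite) ser \<Rightarrow> ('a,'n) M fls" where
  "F S = Abs_fls (\<lambda>k. Abs_M (S k))"

lemma Abs_M_eq0: "(Abs_M X = 0) \<longleftrightarrow> X = mzero"
  by (simp add: zero_M_def M_simps)

lemma F_nth: "lbS S N \<Longrightarrow> F S $$ k = Abs_M (S k)"
  unfolding F_def by (rule nth_Abs_fls_lower_bound) (auto simp: lbS_def zero_M_def)

lemma sum_Abs_M: "finite A \<Longrightarrow> (\<Sum>i\<in>A. Abs_M (f i)) = (Abs_M (\<lambda>a b. \<Sum>i\<in>A. f i a b) :: ('a::comm_ring_1,'n::finite) M)"
  by (induction A rule: finite_induct) (auto simp: zero_M_def mzero_def plus_M_def M_simps)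

lemma smul_lb:
  assumes "lbS S N1" "lbS T N2" shows "lbS (smul S T) (N1 + N2)"
  unfolding lbS_def
proof (intro allI impI smul_empty)
  fix k i assume k: "k < N1 + N2" and "S i \<noteq> mzero" "T (k - i) \<noteq> mzero"
  with assms have "N1 \<le> i" "N2 \<le> k - i" unfolding lbS_def by (meson not_less)+
  thus False using k by linarith
qed

lemma F_mult:
  assumes S: "lbS S N1" and T: "lbS T N2"
  shows "F (smul S T) = F S * F T"
proof (rule fls_eqI)
  fix n
  define df where "df = fls_subdegree (F S)"
  define dg where "dg = fls_subdegree (F T)"
  have w: "smul S T n = (\<lambda>a b. \<Sum>i\<in>{df..n-dg}. mmul (S i) (T (n - i)) a b)"
  proof (intro ext smul_win)
    fix i assume "S i \<noteq> mzero" "T (n - i) \<noteq> mzero"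
    hence "F S $$ i \<noteq> 0" "F T $$ (n-i) \<noteq> 0" using F_nth[OF S] F_nth[OF T] Abs_M_eq0 by auto
    hence "df \<le> i" "dg \<le> n - i" unfolding df_def dg_def by (auto intro: fls_subdegree_leI)
    thus "i \<in> {df..n-dg}" by auto
  qed simp
  have "(F S * F T) $$ n = (\<Sum>i=df..n - dg. F S $$ i * F T $$ (n - i))"
    unfolding df_def dg_def by (rule fls_times_nth(2))
  also have "\<dots> = (\<Sum>i=df..n - dg. Abs_M (mmul (S i) (T (n - i))))"
    by (simp add: F_nth[OF S] F_nth[OF T] times_M_def M_simps)
  also have "\<dots> = Abs_M (smul S T n)" by (simp add: sum_Abs_M w)
  also have "\<dots> = F (smul S T) $$ n" using F_nth[OF smul_lb[OF S T]] by simp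
  finally show "F (smul S T) $$ n = (F S * F T) $$ n" by simp
qed

lemma F_inj: "lbS S N1 \<Longrightarrow> lbS T N2 \<Longrightarrow> F S = F T \<Longrightarrow> S = T"
  by (rule ext) (metis F_nth M_simps(3))

lemma lb_sone: "lbS sone 0" by (auto simp: lbS_def sone_def)

lemma F_sone: "F (sone :: ('a::comm_ring_1,'n::finite) ser) = 1"
  by (rule fls_eqI) (subst F_nth[OF lb_sone], simp add: sone_def one_M_def zero_M_def)

lemma conj_comm:
  fixes G Gi P Q :: "('a::comm_ring_1,'n::finite) ser"
  assumes "lbS G n1" "lbS Gi n2" "lbS P n3" "lbS Q n4" "smul Gi G = sone" "smul P Q = smul Q P"
  shows "smul (smul (smul G P) Gi) (smul (smul G Q) Gi) = smul (smul (smul G Q) Gi) (smul (smul G P) Gi)"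
proof -
  note lb = assms(1-4)
  have l1: "lbS (smul (smul G P) Gi) (n1+n3+n2)" "lbS (smul (smul G Q) Gi) (n1+n4+n2)"
    by (intro smul_lb lb)+
  have e1: "F Gi * F G = 1" using F_mult[OF lb(2) lb(1)] assms(5) F_sone by metis
  have e2: "F P * F Q = F Q * F P" using F_mult[OF lb(3) lb(4)] F_mult[OF lb(4) lb(3)] assms(6) by metis
  have "F G * F P * F Gi * (F G * F Q * F Gi) = F G * F P * (F Gi * F G) * F Q * F Gi"
    by (simp add: mult.assoc)
  also have "\<dots> = F G * (F P * F Q) * F Gi" by (simp add: e1 mult.assoc)
  also have "\<dots> = F G * (F Q * F P) * F Gi" by (simp add: e2)
  also have "\<dots> = F G * F Q * (F Gi * F G) * F P * F Gi" by (simp add: e1 mult.assoc)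
  also have "\<dots> = F G * F Q * F Gi * (F G * F P * F Gi)" by (simp add: mult.assoc)
  moreover have "F (smul (smul (smul G P) Gi) (smul (smul G Q) Gi)) = F G * F P * F Gi * (F G * F Q * F Gi)"
    by (simp only: F_mult[OF l1] F_mult[OF smul_lb[OF lb(1) lb(3)] lb(2)] F_mult[OF smul_lb[OF lb(1) lb(4)] lb(2)]
        F_mult[OF lb(1) lb(3)] F_mult[OF lb(1) lb(4)])
  moreover have "F (smul (smul (smul G Q) Gi) (smul (smul G P) Gi)) = F G * F Q * F Gi * (F G * F P * F Gi)"
    by (simp only: F_mult[OF l1(2) l1(1)] F_mult[OF smul_lb[OF lb(1) lb(3)] lb(2)] F_mult[OF smul_lb[OF lb(1) lb(4)] lb(2)]
        F_mult[OF lb(1) lb(3)] F_mult[OF lb(1) lb(4)])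
  ultimately have "F (smul (smul (smul G P) Gi) (smul (smul G Q) Gi)) = F (smul (smul (smul G Q) Gi) (smul (smul G P) Gi))"
    by simp
  thus ?thesis by (rule F_inj[OF smul_lb[OF l1] smul_lb[OF l1(2) l1(1)]])
qed


definition rS :: "('a,'n) ser \<Rightarrow> ('a,'n) ser" where "rS S = (\<lambda>k. S (- k))"

lemma smul_rS: "smul (rS S) (rS T) k = smul S T (- k)"
  unfolding smul_def rS_def
  by (rule ext, rule ext, rule sum.reindex_bij_witness[of _ uminus uminus]) (auto simp: algebra_simps, (smt (verit))+)

lemma rS_rS [simp]: "rS (rS S) = S" by (simp add: rS_def)

lemma smul_rS': "rS (smul S T) = smul (rS S) (rS T)"
proof (rule ext)
  fix k show "rS (smul S T) k = smul (rS S) (rS T) k" by (simp add: smul_rS) (simp add: rS_def)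
qed

lemma smul_shift_right: "smul S (sshift T m) k = smul S T (k - m)"
  unfolding smul_def sshift_def by (simp add: algebra_simps)

lemma smul_shift_left: "smul (sshift S m) T k = smul S T (k - m)"
  unfolding smul_def sshift_def
  by (rule ext, rule ext, rule sum.reindex_bij_witness[of _ "\<lambda>i. i + m" "\<lambda>i. i - m"]) (auto simp: algebra_simps)

lemma sbracket_shift_right: "sbracket S (sshift T m) = sshift (sbracket S T) m"
  unfolding sbracket_def by (rule ext)+ (simp add: smul_shift_right smul_shift_left, simp add: sshift_def)

lemma smul_shift_both: "smul (sshift S m) (sshift T n) k = smul S T (k - m - n)"
  by (simp add: smul_shift_right smul_shift_left algebra_simps)

lemma smul_sconst: "smul (sconst A) (sconst B) = sconst (mmul A B)"
proof (intro ext)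
  fix k a b
  have "smul (sconst A) (sconst B) k a b = (\<Sum>i\<in>{0}. mmul (sconst A i) (sconst B (k - i)) a b)"
    by (rule smul_win) (auto simp: sconst_def split: if_splits)
  thus "smul (sconst A) (sconst B) k a b = sconst (mmul A B) k a b"
    by (simp add: sconst_def)
qed

lemma lb_sconst: "lbS (sconst A) 0" by (simp add: lbS_def sconst_def)
lemma lb_shift: "lbS S N \<Longrightarrow> lbS (sshift S m) (N + m)" by (simp add: lbS_def sshift_def)
lemma ub_shift: "ubS S N \<Longrightarrow> ubS (sshift S m) (N + m)" by (simp add: ubS_def sshift_def)
lemma ub_lb_rS: "ubS S N \<longleftrightarrow> lbS (rS S) (- N)"
  unfolding ubS_def lbS_def rS_def by (metis minus_less_iff minus_minus)
lemma rS_sconst: "rS (sconst A) = sconst A" by (auto simp: rS_def sconst_def)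
lemma rS_sone: "rS sone = sone" by (auto simp: rS_def sone_def)

definition finp :: "('a::zero,'n) ser \<Rightarrow> ('a,'n) ser \<Rightarrow> int \<Rightarrow> bool" where
  "finp S T k \<longleftrightarrow> finite {i. S i \<noteq> mzero \<and> T (k - i) \<noteq> mzero}"

lemma finp_ub: assumes "ubS S N1" "ubS T N2" shows "finp S T k"
proof -
  have "{i. S i \<noteq> mzero \<and> T (k - i) \<noteq> mzero} \<subseteq> {k - N2..N1}"
  proof
    fix i assume "i \<in> {i. S i \<noteq> mzero \<and> T (k - i) \<noteq> mzero}"
    hence "S i \<noteq> mzero" "T (k - i) \<noteq> mzero" by auto
    thus "i \<in> {k - N2..N1}" using assms unfolding ubS_def by (auto simp: not_less[symmetric])
  qed
  thus ?thesis unfolding finp_def by (rule finite_subset) simp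
qed
lemma finp_lb: assumes "lbS S N1" "lbS T N2" shows "finp S T k"
proof -
  have "{i. S i \<noteq> mzero \<and> T (k - i) \<noteq> mzero} \<subseteq> {N1..k - N2}"
  proof
    fix i assume "i \<in> {i. S i \<noteq> mzero \<and> T (k - i) \<noteq> mzero}"
    hence "S i \<noteq> mzero" "T (k - i) \<noteq> mzero" by auto
    thus "i \<in> {N1..k - N2}" using assms unfolding lbS_def by (auto simp: not_less[symmetric])
  qed
  thus ?thesis unfolding finp_def by (rule finite_subset) simp
qed
lemma finp_finl: assumes "lbS S N1" "ubS S N2" shows "finp S T k"
proof -
  have "{i. S i \<noteq> mzero \<and> T (k - i) \<noteq> mzero} \<subseteq> {N1..N2}"
  proof
    fix i assume "i \<in> {i. S i \<noteq> mzero \<and> T (k - i) \<noteq> mzero}"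
    hence "S i \<noteq> mzero" "T (k - i) \<noteq> mzero" by auto
    thus "i \<in> {N1..N2}" using assms unfolding lbS_def ubS_def by (auto simp: not_less[symmetric])
  qed
  thus ?thesis unfolding finp_def by (rule finite_subset) simp
qed
lemma finp_finr: assumes "lbS T N1" "ubS T N2" shows "finp S T k"
proof -
  have "{i. S i \<noteq> mzero \<and> T (k - i) \<noteq> mzero} \<subseteq> {k - N2..k - N1}"
  proof
    fix i assume "i \<in> {i. S i \<noteq> mzero \<and> T (k - i) \<noteq> mzero}"
    hence "S i \<noteq> mzero" "T (k - i) \<noteq> mzero" by auto
    thus "i \<in> {k - N2..k - N1}" using assms unfolding lbS_def ubS_def by (auto simp: not_less[symmetric])
  qed
  thus ?thesis unfolding finp_def by (rule finite_subset) simp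
qed

lemma smul_split_right:
  assumes "finp S T k"
  shows "smul S T k a b = smul S (pi_ge0 T) k a b + smul S (pi_lt0 T) k a b"
proof -
  let ?A = "{i. S i \<noteq> mzero \<and> T (k - i) \<noteq> mzero}"
  have fin: "finite ?A" using assms by (simp add: finp_def)
  have 1: "smul S T k a b = (\<Sum>i\<in>?A. mmul (S i) (T (k - i)) a b)"
    by (rule smul_win[OF fin]) auto
  have 2: "smul S (pi_ge0 T) k a b = (\<Sum>i\<in>?A. mmul (S i) (pi_ge0 T (k - i)) a b)"
    by (rule smul_win[OF fin]) (auto simp: pi_ge0_def split: if_splits)
  have 3: "smul S (pi_lt0 T) k a b = (\<Sum>i\<in>?A. mmul (S i) (pi_lt0 T (k - i)) a b)"
    by (rule smul_win[OF fin]) (auto simp: pi_lt0_def split: if_splits)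
  show ?thesis unfolding 1 2 3 sum.distrib[symmetric]
    by (rule sum.cong) (auto simp: pi_ge0_def pi_lt0_def)
qed

lemma smul_split_left:
  assumes "finp S T k"
  shows "smul S T k a b = smul (pi_ge0 S) T k a b + smul (pi_lt0 S) T k a b"
proof -
  let ?A = "{i. S i \<noteq> mzero \<and> T (k - i) \<noteq> mzero}"
  have fin: "finite ?A" using assms by (simp add: finp_def)
  have 1: "smul S T k a b = (\<Sum>i\<in>?A. mmul (S i) (T (k - i)) a b)"
    by (rule smul_win[OF fin]) auto
  have 2: "smul (pi_ge0 S) T k a b = (\<Sum>i\<in>?A. mmul (pi_ge0 S i) (T (k - i)) a b)"
    by (rule smul_win[OF fin]) (auto simp: pi_ge0_def split: if_splits)
  have 3: "smul (pi_lt0 S) T k a b = (\<Sum>i\<in>?A. mmul (pi_lt0 S i) (T (k - i)) a b)"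
    by (rule smul_win[OF fin]) (auto simp: pi_lt0_def split: if_splits)
  show ?thesis unfolding 1 2 3 sum.distrib[symmetric]
    by (rule sum.cong) (auto simp: pi_ge0_def pi_lt0_def)
qed

lemma smul_ge_ge: "k < 0 \<Longrightarrow> smul (pi_ge0 S) (pi_ge0 T) k = mzero"
  by (rule smul_empty) (auto simp: pi_ge0_def split: if_splits)
lemma smul_lt_lt: "k \<ge> 0 \<Longrightarrow> smul (pi_lt0 S) (pi_lt0 T) k = mzero"
  by (rule smul_empty) (auto simp: pi_lt0_def split: if_splits)

lemma ub_ge: "ubS S N \<Longrightarrow> ubS (pi_ge0 S) N" by (simp add: ubS_def pi_ge0_def)
lemma ub_lt: "ubS S N \<Longrightarrow> ubS (pi_lt0 S) N" by (simp add: ubS_def pi_lt0_def)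
lemma lb_ge: "lbS S N \<Longrightarrow> lbS (pi_ge0 S) N" by (simp add: lbS_def pi_ge0_def)
lemma lb_lt: "lbS S N \<Longrightarrow> lbS (pi_lt0 S) N" by (simp add: lbS_def pi_lt0_def)
lemma lb_ge0: "lbS (pi_ge0 S) 0" by (simp add: lbS_def pi_ge0_def)
lemma ub_lt0: "ubS (pi_lt0 S) (-1)" by (simp add: ubS_def pi_lt0_def)


lemma pi_ge0_pos: "k \<ge> 0 \<Longrightarrow> pi_ge0 S k = S k" by (simp add: pi_ge0_def)
lemma pi_ge0_neg: "k < 0 \<Longrightarrow> pi_ge0 S k = mzero" by (simp add: pi_ge0_def)
lemma pi_lt0_pos: "k \<ge> 0 \<Longrightarrow> pi_lt0 S k = mzero" by (simp add: pi_lt0_def)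
lemma pi_lt0_neg: "k < 0 \<Longrightarrow> pi_lt0 S k = S k" by (simp add: pi_lt0_def)

lemma zc_pos:
  assumes X: "ubS X N1" and Y: "ubS Y N2" and c: "smul X Y = smul Y X"
  shows "sdiff (sdiff (pi_ge0 (sbracket (pi_ge0 X) Y)) (pi_ge0 (sbracket (pi_ge0 Y) X)))
           (sbracket (pi_ge0 X) (pi_ge0 Y)) = szero"
proof (intro ext)
  fix k a b
  show "sdiff (sdiff (pi_ge0 (sbracket (pi_ge0 X) Y)) (pi_ge0 (sbracket (pi_ge0 Y) X)))
           (sbracket (pi_ge0 X) (pi_ge0 Y)) k a b = szero k a b"
  proof (cases "k < 0")
    case True
    then show ?thesis by (simp add: sdiff_def szero_def sbracket_def pi_ge0_neg smul_ge_ge)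
  next
    case False
    hence k: "k \<ge> 0" by simp
    have e1: "smul (pi_ge0 X) Y k a b = smul (pi_ge0 X) (pi_ge0 Y) k a b + smul (pi_ge0 X) (pi_lt0 Y) k a b"
      by (rule smul_split_right[OF finp_ub[OF ub_ge[OF X] Y]])
    have e2: "smul Y (pi_ge0 X) k a b = smul (pi_ge0 Y) (pi_ge0 X) k a b + smul (pi_lt0 Y) (pi_ge0 X) k a b"
      by (rule smul_split_left[OF finp_ub[OF Y ub_ge[OF X]]])
    have e3: "smul (pi_ge0 Y) X k a b = smul (pi_ge0 Y) (pi_ge0 X) k a b + smul (pi_ge0 Y) (pi_lt0 X) k a b"
      by (rule smul_split_right[OF finp_ub[OF ub_ge[OF Y] X]])
    have e4: "smul X (pi_ge0 Y) k a b = smul (pi_ge0 X) (pi_ge0 Y) k a b + smul (pi_lt0 X) (pi_ge0 Y) k a b"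
      by (rule smul_split_left[OF finp_ub[OF X ub_ge[OF Y]]])
    have e5: "smul X Y k a b = smul (pi_ge0 X) Y k a b + smul (pi_lt0 X) Y k a b"
      by (rule smul_split_left[OF finp_ub[OF X Y]])
    have e6: "smul (pi_lt0 X) Y k a b = smul (pi_lt0 X) (pi_ge0 Y) k a b + smul (pi_lt0 X) (pi_lt0 Y) k a b"
      by (rule smul_split_right[OF finp_ub[OF ub_lt[OF X] Y]])
    have e7: "smul Y X k a b = smul (pi_ge0 Y) X k a b + smul (pi_lt0 Y) X k a b"
      by (rule smul_split_left[OF finp_ub[OF Y X]])
    have e8: "smul (pi_lt0 Y) X k a b = smul (pi_lt0 Y) (pi_ge0 X) k a b + smul (pi_lt0 Y) (pi_lt0 X) k a b"
      by (rule smul_split_right[OF finp_ub[OF ub_lt[OF Y] X]])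
    have z1: "smul (pi_lt0 X) (pi_lt0 Y) k a b = 0" "smul (pi_lt0 Y) (pi_lt0 X) k a b = 0"
      by (simp_all add: smul_lt_lt[OF k])
    have "smul X Y k a b = smul Y X k a b" using c by simp
    hence Z: "smul (pi_ge0 X) (pi_ge0 Y) k a b + smul (pi_ge0 X) (pi_lt0 Y) k a b + smul (pi_lt0 X) (pi_ge0 Y) k a b
      = smul (pi_ge0 Y) (pi_ge0 X) k a b + smul (pi_ge0 Y) (pi_lt0 X) k a b + smul (pi_lt0 Y) (pi_ge0 X) k a b"
      unfolding e5 e1 e6 e7 e3 e8 z1 by (simp add: algebra_simps)
    have "sdiff (sdiff (pi_ge0 (sbracket (pi_ge0 X) Y)) (pi_ge0 (sbracket (pi_ge0 Y) X)))
           (sbracket (pi_ge0 X) (pi_ge0 Y)) k a b =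
       (smul (pi_ge0 X) (pi_ge0 Y) k a b + smul (pi_ge0 X) (pi_lt0 Y) k a b + smul (pi_lt0 X) (pi_ge0 Y) k a b)
      - (smul (pi_ge0 Y) (pi_ge0 X) k a b + smul (pi_ge0 Y) (pi_lt0 X) k a b + smul (pi_lt0 Y) (pi_ge0 X) k a b)"
      unfolding sdiff_def sbracket_def pi_ge0_pos[OF k] e1 e2 e3 e4 by (simp add: algebra_simps)
    also have "\<dots> = 0" using Z by simp
    finally show ?thesis by (simp add: szero_def)
  qed
qed

lemma zc_neg:
  assumes X: "lbS X N1" and Y: "lbS Y N2" and c: "smul X Y = smul Y X"
  shows "sdiff (sdiff (pi_lt0 (sbracket (pi_lt0 X) Y)) (pi_lt0 (sbracket (pi_lt0 Y) X)))
           (sbracket (pi_lt0 X) (pi_lt0 Y)) = szero"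
proof (intro ext)
  fix k a b
  show "sdiff (sdiff (pi_lt0 (sbracket (pi_lt0 X) Y)) (pi_lt0 (sbracket (pi_lt0 Y) X)))
           (sbracket (pi_lt0 X) (pi_lt0 Y)) k a b = szero k a b"
  proof (cases "k \<ge> 0")
    case True
    then show ?thesis by (simp add: sdiff_def szero_def sbracket_def pi_lt0_pos smul_lt_lt)
  next
    case False
    hence k: "k < 0" by simp
    have e1: "smul (pi_lt0 X) Y k a b = smul (pi_lt0 X) (pi_ge0 Y) k a b + smul (pi_lt0 X) (pi_lt0 Y) k a b"
      by (rule smul_split_right[OF finp_lb[OF lb_lt[OF X] Y]])
    have e2: "smul Y (pi_lt0 X) k a b = smul (pi_ge0 Y) (pi_lt0 X) k a b + smul (pi_lt0 Y) (pi_lt0 X) k a b"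
      by (rule smul_split_left[OF finp_lb[OF Y lb_lt[OF X]]])
    have e3: "smul (pi_lt0 Y) X k a b = smul (pi_lt0 Y) (pi_ge0 X) k a b + smul (pi_lt0 Y) (pi_lt0 X) k a b"
      by (rule smul_split_right[OF finp_lb[OF lb_lt[OF Y] X]])
    have e4: "smul X (pi_lt0 Y) k a b = smul (pi_ge0 X) (pi_lt0 Y) k a b + smul (pi_lt0 X) (pi_lt0 Y) k a b"
      by (rule smul_split_left[OF finp_lb[OF X lb_lt[OF Y]]])
    have e5: "smul X Y k a b = smul (pi_ge0 X) Y k a b + smul (pi_lt0 X) Y k a b"
      by (rule smul_split_left[OF finp_lb[OF X Y]])
    have e6: "smul (pi_ge0 X) Y k a b = smul (pi_ge0 X) (pi_ge0 Y) k a b + smul (pi_ge0 X) (pi_lt0 Y) k a b"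
      by (rule smul_split_right[OF finp_lb[OF lb_ge[OF X] Y]])
    have e7: "smul Y X k a b = smul (pi_ge0 Y) X k a b + smul (pi_lt0 Y) X k a b"
      by (rule smul_split_left[OF finp_lb[OF Y X]])
    have e8: "smul (pi_ge0 Y) X k a b = smul (pi_ge0 Y) (pi_ge0 X) k a b + smul (pi_ge0 Y) (pi_lt0 X) k a b"
      by (rule smul_split_right[OF finp_lb[OF lb_ge[OF Y] X]])
    have z1: "smul (pi_ge0 X) (pi_ge0 Y) k a b = 0" "smul (pi_ge0 Y) (pi_ge0 X) k a b = 0"
      by (simp_all add: smul_ge_ge[OF k])
    have "smul X Y k a b = smul Y X k a b" using c by simp
    hence Z: "smul (pi_lt0 X) (pi_lt0 Y) k a b + smul (pi_lt0 X) (pi_ge0 Y) k a b + smul (pi_ge0 X) (pi_lt0 Y) k a b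
      = smul (pi_lt0 Y) (pi_lt0 X) k a b + smul (pi_lt0 Y) (pi_ge0 X) k a b + smul (pi_ge0 Y) (pi_lt0 X) k a b"
      unfolding e5 e1 e6 e7 e3 e8 z1 by (simp add: algebra_simps)
    have "sdiff (sdiff (pi_lt0 (sbracket (pi_lt0 X) Y)) (pi_lt0 (sbracket (pi_lt0 Y) X)))
           (sbracket (pi_lt0 X) (pi_lt0 Y)) k a b =
       (smul (pi_lt0 X) (pi_lt0 Y) k a b + smul (pi_lt0 X) (pi_ge0 Y) k a b + smul (pi_ge0 X) (pi_lt0 Y) k a b)
      - (smul (pi_lt0 Y) (pi_lt0 X) k a b + smul (pi_lt0 Y) (pi_ge0 X) k a b + smul (pi_ge0 Y) (pi_lt0 X) k a b)"
      unfolding sdiff_def sbracket_def pi_lt0_neg[OF k] e1 e2 e3 e4 by (simp add: algebra_simps)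
    also have "\<dots> = 0" using Z by simp
    finally show ?thesis by (simp add: szero_def)
  qed
qed

lemma zc_mix:
  assumes X: "lbS X N1" and Y: "ubS Y N2"
  shows "sdiff (sdiff (pi_ge0 (sbracket (pi_lt0 X) Y)) (pi_lt0 (sbracket (pi_ge0 Y) X)))
           (sbracket (pi_lt0 X) (pi_ge0 Y)) = szero"
proof (intro ext)
  fix k a b
  show "sdiff (sdiff (pi_ge0 (sbracket (pi_lt0 X) Y)) (pi_lt0 (sbracket (pi_ge0 Y) X)))
           (sbracket (pi_lt0 X) (pi_ge0 Y)) k a b = szero k a b"
  proof (cases "k \<ge> 0")
    case True
    have e1: "smul (pi_lt0 X) Y k a b = smul (pi_lt0 X) (pi_ge0 Y) k a b + smul (pi_lt0 X) (pi_lt0 Y) k a b"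
      by (rule smul_split_right[OF finp_finl[OF lb_lt[OF X] ub_lt0]])
    have e2: "smul Y (pi_lt0 X) k a b = smul (pi_ge0 Y) (pi_lt0 X) k a b + smul (pi_lt0 Y) (pi_lt0 X) k a b"
      by (rule smul_split_left[OF finp_finr[OF lb_lt[OF X] ub_lt0]])
    show ?thesis
      by (simp add: smul_lt_lt[OF True] sdiff_def szero_def sbracket_def pi_lt0_pos[OF True] pi_ge0_pos[OF True] e1 e2)
  next
    case False
    hence k: "k < 0" by simp
    have e1: "smul (pi_ge0 Y) X k a b = smul (pi_ge0 Y) (pi_ge0 X) k a b + smul (pi_ge0 Y) (pi_lt0 X) k a b"
      by (rule smul_split_right[OF finp_finl[OF lb_ge0 ub_ge[OF Y]]])
    have e2: "smul X (pi_ge0 Y) k a b = smul (pi_ge0 X) (pi_ge0 Y) k a b + smul (pi_lt0 X) (pi_ge0 Y) k a b"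
      by (rule smul_split_left[OF finp_finr[OF lb_ge0 ub_ge[OF Y]]])
    show ?thesis
      by (simp add: smul_ge_ge[OF k] sdiff_def szero_def sbracket_def pi_lt0_neg[OF k] pi_ge0_neg[OF k] e1 e2)
  qed
qed



lemma deriv_zero: "C_derivation emb d \<Longrightarrow> d 0 = 0"
  unfolding C_derivation_def by (metis add_cancel_right_right add_0)

lemma emb_zero: "C_algebra_map emb \<Longrightarrow> emb 0 = 0"
  unfolding C_algebra_map_def by (metis add_cancel_right_right add_0)

lemma emb_sum: "C_algebra_map emb \<Longrightarrow> emb (\<Sum>i\<in>A. f i) = (\<Sum>i\<in>A. emb (f i))"
  by (induction A rule: infinite_finite_induct) (auto simp: emb_zero C_algebra_map_def)

lemma cmat_mmul: "C_algebra_map emb \<Longrightarrow> mmul (cmat emb A) (cmat emb B) = cmat emb (mmul A B)"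
  unfolding mmul_def cmat_def by (intro ext) (simp add: emb_sum, simp add: C_algebra_map_def)

lemma sapply_ge: "d 0 = 0 \<Longrightarrow> sapply d (pi_ge0 (sshift S m)) = pi_ge0 (sshift (sapply d S) m)"
  unfolding sapply_def pi_ge0_def sshift_def by (auto simp: mzero_def)
lemma sapply_lt: "d 0 = 0 \<Longrightarrow> sapply d (pi_lt0 (sshift S m)) = pi_lt0 (sshift (sapply d S) m)"
  unfolding sapply_def pi_lt0_def sshift_def by (auto simp: mzero_def)

lemma U_props:
  assumes alg: "C_algebra_map emb"
    and Ec: "\<And>a b. a \<in> {1..r} \<Longrightarrow> b \<in> {1..r} \<Longrightarrow> mmul (E a) (E b) = mmul (E b) (E a)"
    and def: "deformation emb E r U W"
    and a1: "a1 \<in> {1..r}" and a2: "a2 \<in> {1..r}"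
  shows "smul (U a1) (U a2) = smul (U a2) (U a1)" "ubS (U a1) 0"
proof -
  from def obtain g ginv where g: "G_lt0 g" "G_lt0 ginv" "smul ginv g = sone"
      and U: "\<And>a. a\<in>{1..r} \<Longrightarrow> U a = smul (smul g (sconst (cmat emb (E a)))) ginv"
    unfolding deformation_def by blast
  have lg: "lbS (rS g) 0" "lbS (rS ginv) 0"
    using g(1,2) unfolding G_lt0_def lbS_def rS_def by auto
  have rU: "rS (U a) = smul (smul (rS g) (sconst (cmat emb (E a)))) (rS ginv)" if "a \<in> {1..r}" for a
    using U[OF that] by (simp add: smul_rS' rS_sconst)
  have gi: "smul (rS ginv) (rS g) = sone" using g(3) by (simp add: smul_rS'[symmetric] rS_sone)
  have pc: "smul (sconst (cmat emb (E a1))) (sconst (cmat emb (E a2))) = smul (sconst (cmat emb (E a2))) (sconst (cmat emb (E a1)))"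
    by (simp add: smul_sconst cmat_mmul[OF alg] Ec[OF a1 a2])
  have "smul (rS (U a1)) (rS (U a2)) = smul (rS (U a2)) (rS (U a1))"
    unfolding rU[OF a1] rU[OF a2] by (rule conj_comm[OF lg(1) lg(2) lb_sconst lb_sconst gi pc])
  hence "rS (smul (U a1) (U a2)) = rS (smul (U a2) (U a1))" by (simp add: smul_rS')
  hence "rS (rS (smul (U a1) (U a2))) = rS (rS (smul (U a2) (U a1)))" by simp
  thus "smul (U a1) (U a2) = smul (U a2) (U a1)" by simp
  have "lbS (rS (U a1)) (0 + 0 + 0)" unfolding rU[OF a1] by (intro smul_lb lg lb_sconst)
  thus "ubS (U a1) 0" by (simp add: ub_lb_rS)
qed

lemma W_props:
  assumes alg: "C_algebra_map emb"
    and Ec: "\<And>a b. a \<in> {1..r} \<Longrightarrow> b \<in> {1..r} \<Longrightarrow> mmul (E a) (E b) = mmul (E b) (E a)"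
    and def: "deformation emb E r U W"
    and a1: "a1 \<in> {1..r}" and a2: "a2 \<in> {1..r}"
  shows "smul (W a1) (W a2) = smul (W a2) (W a1)" "lbS (W a1) (-1)"
proof -
  from def obtain X Xinv where g: "G_ge0 X" "G_ge0 Xinv" "smul Xinv X = sone"
      and W: "\<And>b. b\<in>{1..r} \<Longrightarrow> W b = smul (smul X (sshift (sconst (cmat emb (E b))) (-1))) Xinv"
    unfolding deformation_def by blast
  have lg: "lbS X 0" "lbS Xinv 0"
    using g(1,2) unfolding G_ge0_def lbS_def by auto
  have lq: "lbS (sshift (sconst (cmat emb (E b))) (-1)) (0 + -1)" for b
    by (rule lb_shift[OF lb_sconst])
  have pc: "smul (sshift (sconst (cmat emb (E a1))) (-1)) (sshift (sconst (cmat emb (E a2))) (-1))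
     = smul (sshift (sconst (cmat emb (E a2))) (-1)) (sshift (sconst (cmat emb (E a1))) (-1))"
    by (rule ext) (simp add: smul_shift_both smul_sconst cmat_mmul[OF alg] Ec[OF a1 a2])
  show "smul (W a1) (W a2) = smul (W a2) (W a1)"
    unfolding W[OF a1] W[OF a2] by (rule conj_comm[OF lg(1) lg(2) lq lq g(3) pc])
  have "lbS (W a1) (0 + (0 + -1) + 0)" unfolding W[OF a1] by (intro smul_lb lg lq)
  thus "lbS (W a1) (-1)" by simp
qed

theorem proposition3p1:
  fixes emb :: "complex \<Rightarrow> 'a::comm_ring_1"
    and D :: "int \<Rightarrow> nat \<Rightarrow> 'a \<Rightarrow> 'a"
    and E :: "nat \<Rightarrow> (complex,'n::finite) mat"
    and r :: nat
    and U W :: "nat \<Rightarrow> ('a,'n) ser"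
    and B C :: "int \<Rightarrow> nat \<Rightarrow> ('a,'n) ser"
  assumes alg: "C_algebra_map emb"
    and der: "\<And>m a. a \<in> {1..r} \<Longrightarrow> C_derivation emb (D m a)"
    and comm: "\<And>m1 a1 m2 a2 x. a1 \<in> {1..r} \<Longrightarrow> a2 \<in> {1..r} \<Longrightarrow>
                 D m1 a1 (D m2 a2 x) = D m2 a2 (D m1 a1 x)"
    and t: "max_comm_basis E r"
    and sol: "hierarchy_solution emb D E r U W"
    and B_def: "\<And>m a. m \<ge> 0 \<Longrightarrow> B m a = pi_ge0 (sshift (U a) m)"
    and C_def: "\<And>m b. m < 0 \<Longrightarrow> C m b = pi_lt0 (sshift (W b) (m + 1))"
  shows "(\<forall>m1<0. \<forall>m2\<ge>0. \<forall>b1\<in>{1..r}. \<forall>a2\<in>{1..r}.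
            sdiff (sdiff (sapply (D m1 b1) (B m2 a2)) (sapply (D m2 a2) (C m1 b1)))
                  (sbracket (C m1 b1) (B m2 a2)) = szero) \<and>
         (\<forall>m1\<ge>0. \<forall>m2\<ge>0. \<forall>a1\<in>{1..r}. \<forall>a2\<in>{1..r}.
            sdiff (sdiff (sapply (D m1 a1) (B m2 a2)) (sapply (D m2 a2) (B m1 a1)))
                  (sbracket (B m1 a1) (B m2 a2)) = szero) \<and>
         (\<forall>m1<0. \<forall>m2<0. \<forall>b1\<in>{1..r}. \<forall>b2\<in>{1..r}.
            sdiff (sdiff (sapply (D m1 b1) (C m2 b2)) (sapply (D m2 b2) (C m1 b1)))
                  (sbracket (C m1 b1) (C m2 b2)) = szero)"
proof -
  have Ec: "\<And>a b. a \<in> {1..r} \<Longrightarrow> b \<in> {1..r} \<Longrightarrow> mmul (E a) (E b) = mmul (E b) (E a)"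
    using t unfolding max_comm_basis_def comm_sl_basis_def by blast
  have def: "deformation emb E r U W"
    and L1: "\<And>m a1 a2. m \<ge> 0 \<Longrightarrow> a1 \<in> {1..r} \<Longrightarrow> a2 \<in> {1..r} \<Longrightarrow>
        sapply (D m a1) (U a2) = sbracket (pi_ge0 (sshift (U a1) m)) (U a2)"
    and L2: "\<And>m a1 b. m \<ge> 0 \<Longrightarrow> a1 \<in> {1..r} \<Longrightarrow> b \<in> {1..r} \<Longrightarrow>
        sapply (D m a1) (W b) = sbracket (pi_ge0 (sshift (U a1) m)) (W b)"
    and L3: "\<And>m b1 b2. m < 0 \<Longrightarrow> b1 \<in> {1..r} \<Longrightarrow> b2 \<in> {1..r} \<Longrightarrow>
        sapply (D m b1) (W b2) = sbracket (pi_lt0 (sshift (W b1) (m + 1))) (W b2)"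
    and L4: "\<And>m b1 a. m < 0 \<Longrightarrow> b1 \<in> {1..r} \<Longrightarrow> a \<in> {1..r} \<Longrightarrow>
        sapply (D m b1) (U a) = sbracket (pi_lt0 (sshift (W b1) (m + 1))) (U a)"
    using sol unfolding hierarchy_solution_def by blast+
  have d0: "\<And>m a. a \<in> {1..r} \<Longrightarrow> D m a 0 = 0" using der deriv_zero by blast
  have UC: "\<And>a1 a2. a1 \<in> {1..r} \<Longrightarrow> a2 \<in> {1..r} \<Longrightarrow> smul (U a1) (U a2) = smul (U a2) (U a1)"
    and Uub: "\<And>a. a \<in> {1..r} \<Longrightarrow> ubS (U a) 0"
    using U_props[OF alg Ec def] by blast+
  have WC: "\<And>a1 a2. a1 \<in> {1..r} \<Longrightarrow> a2 \<in> {1..r} \<Longrightarrow> smul (W a1) (W a2) = smul (W a2) (W a1)"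
    and Wlb: "\<And>a. a \<in> {1..r} \<Longrightarrow> lbS (W a) (-1)"
    using W_props[OF alg Ec def] by blast+
  have DB: "sapply (D m1 c) (B m2 a2) = pi_ge0 (sbracket (pi_ge0 (sshift (U c) m1)) (sshift (U a2) m2))"
    if "m1 \<ge> 0" "m2 \<ge> 0" "c \<in> {1..r}" "a2 \<in> {1..r}" for m1 m2 c a2
    using that by (simp add: B_def sapply_ge d0 L1 sbracket_shift_right)
  have DB': "sapply (D m1 c) (B m2 a2) = pi_ge0 (sbracket (C m1 c) (sshift (U a2) m2))"
    if "m1 < 0" "m2 \<ge> 0" "c \<in> {1..r}" "a2 \<in> {1..r}" for m1 m2 c a2
    using that by (simp add: B_def C_def sapply_ge d0 L4 sbracket_shift_right)
  have DC: "sapply (D m2 c) (C m1 b1) = pi_lt0 (sbracket (B m2 c) (sshift (W b1) (m1 + 1)))"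
    if "m1 < 0" "m2 \<ge> 0" "c \<in> {1..r}" "b1 \<in> {1..r}" for m1 m2 c b1
    using that by (simp add: B_def C_def sapply_lt d0 L2 sbracket_shift_right)
  have DC': "sapply (D m2 c) (C m1 b1) = pi_lt0 (sbracket (C m2 c) (sshift (W b1) (m1 + 1)))"
    if "m1 < 0" "m2 < 0" "c \<in> {1..r}" "b1 \<in> {1..r}" for m1 m2 c b1
    using that by (simp add: C_def sapply_lt d0 L3 sbracket_shift_right)
  show ?thesis
  proof (intro conjI allI impI ballI)
    fix m1 m2 :: int and b1 a2 assume m: "m1 < 0" "m2 \<ge> 0" and b: "b1 \<in> {1..r}" "a2 \<in> {1..r}"
    show "sdiff (sdiff (sapply (D m1 b1) (B m2 a2)) (sapply (D m2 a2) (C m1 b1)))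
                  (sbracket (C m1 b1) (B m2 a2)) = szero"
      unfolding DB'[OF m b] DC[OF m b(2,1)] unfolding B_def[OF m(2)] C_def[OF m(1)]
      by (rule zc_mix[OF lb_shift[OF Wlb[OF b(1)]] ub_shift[OF Uub[OF b(2)]]])
  next
    fix m1 m2 :: int and a1 a2 assume m: "m1 \<ge> 0" "m2 \<ge> 0" and b: "a1 \<in> {1..r}" "a2 \<in> {1..r}"
    have c: "smul (sshift (U a1) m1) (sshift (U a2) m2) = smul (sshift (U a2) m2) (sshift (U a1) m1)"
      by (rule ext) (simp add: smul_shift_both UC[OF b] algebra_simps)
    show "sdiff (sdiff (sapply (D m1 a1) (B m2 a2)) (sapply (D m2 a2) (B m1 a1)))
                  (sbracket (B m1 a1) (B m2 a2)) = szero"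
      unfolding DB[OF m b] DB[OF m(2,1) b(2,1)] unfolding B_def[OF m(1)] B_def[OF m(2)]
      by (rule zc_pos[OF ub_shift[OF Uub[OF b(1)]] ub_shift[OF Uub[OF b(2)]] c])
  next
    fix m1 m2 :: int and b1 b2 assume m: "m1 < 0" "m2 < 0" and b: "b1 \<in> {1..r}" "b2 \<in> {1..r}"
    have c: "smul (sshift (W b1) (m1 + 1)) (sshift (W b2) (m2 + 1)) = smul (sshift (W b2) (m2 + 1)) (sshift (W b1) (m1 + 1))"
      by (rule ext) (simp add: smul_shift_both WC[OF b] algebra_simps)
    show "sdiff (sdiff (sapply (D m1 b1) (C m2 b2)) (sapply (D m2 b2) (C m1 b1)))
                  (sbracket (C m1 b1) (C m2 b2)) = szero"
      unfolding DC'[OF m(2,1) b(1,2)] DC'[OF m b(2,1)] unfolding C_def[OF m(1)] C_def[OF m(2)]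
      by (rule zc_neg[OF lb_shift[OF Wlb[OF b(1)]] lb_shift[OF Wlb[OF b(2)]] c])
  qed
qed

end
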